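(* Let $F$ be a field and let $A$ be a unital $F$-algebra without zero divisors which is either flexible or quadratic. Then $A$ is von-Neumann finite.
   Context: An $F$-algebra is a vector space with a bilinear, not necessarily associative, multiplication; unital means it has a two-sided identity $1$. $A$ has no zero divisors if $ab=0$ implies $a=0$ or $b=0$. $A$ is flexible if $a(ba)=(ab)a$ for all $a,b\in A$. $A$ is quadratic if it is unital and $1,a,a^2$ are linearly dependent for every $a\in A$. $A$ is von-Neumann finite if $ab=1$ implies $ba=1$ for all $a,b\in A$. *)

theory Defs
  imports Complex_Main
begin

definition F_algebra :: "('f::field \<Rightarrow> 'a::ab_group_add \<Rightarrow> 'a) \<Rightarrow> ('a \<Rightarrow> 'a \<Rightarrow> 'a) \<Rightarrow> bool" where
  "F_algebra smul mul \<longleftrightarrow>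
     vector_space smul \<and>
     (\<forall>x y z. mul (x + y) z = mul x z + mul y z) \<and>
     (\<forall>x y z. mul x (y + z) = mul x y + mul x z) \<and>
     (\<forall>c x y. mul (smul c x) y = smul c (mul x y)) \<and>
     (\<forall>c x y. mul x (smul c y) = smul c (mul x y))"

definition is_identity :: "('a \<Rightarrow> 'a \<Rightarrow> 'a) \<Rightarrow> 'a \<Rightarrow> bool" where
  "is_identity mul one \<longleftrightarrow> (\<forall>x. mul one x = x \<and> mul x one = x)"

definition no_zero_divisors_alg :: "('a::zero \<Rightarrow> 'a \<Rightarrow> 'a) \<Rightarrow> bool" where
  "no_zero_divisors_alg mul \<longleftrightarrow> (\<forall>a b. mul a b = 0 \<longrightarrow> a = 0 \<or> b = 0)"

definition flexible :: "('a \<Rightarrow> 'a \<Rightarrow> 'a) \<Rightarrow> bool" where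
  "flexible mul \<longleftrightarrow> (\<forall>a b. mul a (mul b a) = mul (mul a b) a)"

definition quadratic :: "('f::field \<Rightarrow> 'a::ab_group_add \<Rightarrow> 'a) \<Rightarrow> ('a \<Rightarrow> 'a \<Rightarrow> 'a) \<Rightarrow> 'a \<Rightarrow> bool" where
  "quadratic smul mul one \<longleftrightarrow> is_identity mul one \<and>
     (\<forall>a. \<exists>\<alpha> \<beta> \<gamma>. (\<alpha>, \<beta>, \<gamma>) \<noteq> (0, 0, 0) \<and>
        smul \<alpha> one + smul \<beta> a + smul \<gamma> (mul a a) = 0)"

definition von_neumann_finite :: "('a \<Rightarrow> 'a \<Rightarrow> 'a) \<Rightarrow> 'a \<Rightarrow> bool" where
  "von_neumann_finite mul one \<longleftrightarrow> (\<forall>a b. mul a b = one \<longrightarrow> mul b a = one)"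

end

theory Submission
  imports Defs
begin

theorem proposition4p3:
  fixes smul :: "'f::field \<Rightarrow> 'a::ab_group_add \<Rightarrow> 'a"
    and mul :: "'a \<Rightarrow> 'a \<Rightarrow> 'a"
    and one :: 'a
  assumes "F_algebra smul mul"
    and "is_identity mul one"
    and "no_zero_divisors_alg mul"
    and "flexible mul \<or> quadratic smul mul one"
  shows "von_neumann_finite mul one"
proof -
  have vs: "vector_space smul" and
    ladd: "\<And>x y z. mul (x + y) z = mul x z + mul y z" and
    radd: "\<And>x y z. mul x (y + z) = mul x y + mul x z" and
    lsc: "\<And>c x y. mul (smul c x) y = smul c (mul x y)" and
    rsc: "\<And>c x y. mul x (smul c y) = smul c (mul x y)"
    using assms(1) unfolding F_algebra_def by auto
  interpret V: vector_space smul by (rule vs)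
  have l1: "\<And>x. mul one x = x" and r1: "\<And>x. mul x one = x"
    using assms(2) unfolding is_identity_def by auto
  have nzd: "\<And>x y. mul x y = 0 \<Longrightarrow> x = 0 \<or> y = 0"
    using assms(3) unfolding no_zero_divisors_alg_def by auto
  have l0: "\<And>x. mul 0 x = 0" by (metis ladd add_cancel_right_left add_0)
  have r0: "\<And>x. mul x 0 = 0" by (metis radd add_cancel_right_left add_0)
  have ldiff: "\<And>x y z. mul (x - y) z = mul x z - mul y z"
    by (metis ladd diff_add_cancel eq_diff_eq)
  have rdiff: "\<And>x y z. mul x (y - z) = mul x y - mul x z"
    by (metis radd diff_add_cancel eq_diff_eq)
  have rneg: "\<And>x y. mul x (- y) = - mul x y" using rdiff[of _ 0] r0 by simp
  show ?thesis unfolding von_neumann_finite_def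
  proof (intro allI impI)
    fix a b assume ab: "mul a b = one"
    show "mul b a = one"
    proof (cases "one = 0")
      case True
      have "mul b a = mul one (mul b a)" by (rule l1[symmetric])
      also have "\<dots> = mul 0 (mul b a)" by (subst True) (rule refl)
      also have "\<dots> = one" unfolding l0 by (rule True[symmetric])
      finally show ?thesis .
    next
      case n1: False
      have a0: "a \<noteq> 0" using ab n1 l0 by auto
      have b0: "b \<noteq> 0" using ab n1 r0 by auto
      from assms(4) show ?thesis
      proof
        assume "flexible mul"
        then have "mul a (mul b a) = mul (mul a b) a" unfolding flexible_def by auto
        then have "mul a (mul b a) = mul a one" using ab l1 r1 by simp
        then have "mul a (mul b a - one) = 0" by (simp add: rdiff)
        then show ?thesis using a0 nzd by fastforce
      next
        assume "quadratic smul mul one"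
        then obtain \<alpha> \<beta> \<gamma> where nz: "(\<alpha>, \<beta>, \<gamma>) \<noteq> (0, 0, 0)" and
          eq: "smul \<alpha> one + smul \<beta> b + smul \<gamma> (mul b b) = 0"
          unfolding quadratic_def by blast
        define x where "x = smul \<gamma> b + smul \<beta> one"
        have xb: "mul x b = - smul \<alpha> one"
          unfolding x_def using eq by (simp add: ladd lsc l1 eq_neg_iff_add_eq_0 algebra_simps)
        have bx: "mul b x = - smul \<alpha> one"
          unfolding x_def using eq by (simp add: radd rsc r1 eq_neg_iff_add_eq_0 algebra_simps)
        show ?thesis
        proof (cases "\<alpha> = 0")
          case False
          have m0: "mul (x + smul \<alpha> a) b = 0" by (simp add: ladd lsc xb ab)
          have "x + smul \<alpha> a = 0" using nzd[OF m0] b0 by blast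
          then have "x = - smul \<alpha> a" by (simp add: eq_neg_iff_add_eq_0)
          then have "mul b x = - smul \<alpha> (mul b a)"
            by (simp add: rsc rneg)
          with bx have "smul \<alpha> (mul b a) = smul \<alpha> one" by simp
          then show ?thesis by (rule V.scale_left_imp_eq[OF False])
        next
          case True
          have m0: "mul x b = 0" using xb True by simp
          have x0: "x = 0" using nzd[OF m0] b0 by blast
          show ?thesis
          proof (cases "\<gamma> = 0")
            case True
            then have "\<beta> \<noteq> 0" using nz \<open>\<alpha> = 0\<close> by auto
            moreover have "smul \<beta> one = 0" using x0 True unfolding x_def by simp
            ultimately show ?thesis using n1 by simp
          next
            case False
            have "smul \<gamma> b = - smul \<beta> one" using x0 unfolding x_def
              by (simp add: eq_neg_iff_add_eq_0)
            then have "b = smul (- \<beta> / \<gamma>) one" using False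
              by (metis V.scale_left_imp_eq V.scale_minus_left V.scale_scale nonzero_mult_div_cancel_left times_divide_eq_right)
            then have "mul b a = smul (- \<beta> / \<gamma>) a" and "mul a b = smul (- \<beta> / \<gamma>) a"
              by (simp_all only: lsc rsc l1 r1)
            then show ?thesis using ab by simp
          qed
        qed
      qed
    qed
  qed
qed

end
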